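(* Let $G$ be a finite simple graph. Suppose there exists an injective coloring $f$ of $S_G^2$ using exactly $\chi_i(S_G^2)$ colors such that all extreme vertices of $S_G^2$ receive the same color, and for each extreme vertex $(u,u)$, $u\in V(G)$, the color $f(u,u)$ is not assigned to any neighbor of $(u,u)$ in $S_G^2$. Then $\chi_i(S_G^n)=\chi_i(S_G^2)$ for all $n\ge 2$.
   Context: For a graph $H$, an injective $k$-coloring is a map $f:V(H)\to\{1,\dots,k\}$ such that any two distinct vertices $u,w$ with $f(u)=f(w)$ have no common neighbor; $\chi_i(H)$ is the least such $k$. For a graph $G$ and positive integer $n$, the generalized Sierpiński graph $S_G^n$ has vertex set $V(G)^n$, and $(u_1,\dots,u_n)$, $(v_1,\dots,v_n)$ are adjacent if and only if there is $d\in\{1,\dots,n\}$ with $u_i=v_i$ for $i<d$, $u_dv_d\in E(G)$, and $u_i=v_d$, $v_i=u_d$ for all $i>d$. The extreme vertices of $S_G^n$ are the vertices $(u,u,\dots,u)$ with $u\in V(G)$. *)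

theory Defs
  imports Main
begin

definition simple_graph :: "'a set \<Rightarrow> ('a \<Rightarrow> 'a \<Rightarrow> bool) \<Rightarrow> bool" where
  "simple_graph V E \<longleftrightarrow> finite V \<and> (\<forall>u v. E u v \<longrightarrow> u \<in> V \<and> v \<in> V)
     \<and> (\<forall>u v. E u v \<longrightarrow> E v u) \<and> (\<forall>u. \<not> E u u)"

definition injective_coloring ::
  "'b set \<Rightarrow> ('b \<Rightarrow> 'b \<Rightarrow> bool) \<Rightarrow> ('b \<Rightarrow> nat) \<Rightarrow> nat \<Rightarrow> bool" where
  "injective_coloring W A f k \<longleftrightarrow> (\<forall>v\<in>W. f v \<in> {1..k}) \<and>
     (\<forall>u\<in>W. \<forall>w\<in>W. u \<noteq> w \<and> f u = f w \<longrightarrow> \<not> (\<exists>x\<in>W. A u x \<and> A w x))"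

definition inj_chromatic :: "'b set \<Rightarrow> ('b \<Rightarrow> 'b \<Rightarrow> bool) \<Rightarrow> nat" where
  "inj_chromatic W A = (LEAST k. \<exists>f. injective_coloring W A f k)"

text \<open>Generalized Sierpinski graph S_G^n: vertices are words of length n over V
  (position i of the list = coordinate i+1); adjacency as in the paper, 0-indexed.\<close>
definition sier_verts :: "'a set \<Rightarrow> nat \<Rightarrow> 'a list set" where
  "sier_verts V n = {xs. length xs = n \<and> set xs \<subseteq> V}"

definition sier_adj :: "('a \<Rightarrow> 'a \<Rightarrow> bool) \<Rightarrow> nat \<Rightarrow> 'a list \<Rightarrow> 'a list \<Rightarrow> bool" where
  "sier_adj E n xs ys \<longleftrightarrow> length xs = n \<and> length ys = n \<and>
     (\<exists>d<n. (\<forall>i<d. xs ! i = ys ! i) \<and> E (xs ! d) (ys ! d) \<and>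
        (\<forall>i. d < i \<and> i < n \<longrightarrow> xs ! i = ys ! d \<and> ys ! i = xs ! d))"

end

theory Submission
  imports Defs
begin

lemma sier_adj_sym:
  assumes G: "simple_graph V E" and a: "sier_adj E n x y"
  shows "sier_adj E n y x"
proof -
  from a obtain d where d: "d < n" "\<forall>i<d. x ! i = y ! i" "E (x ! d) (y ! d)"
    "\<forall>i. d < i \<and> i < n \<longrightarrow> x ! i = y ! d \<and> y ! i = x ! d" and l: "length x = n" "length y = n"
    unfolding sier_adj_def by blast
  have "E (y ! d) (x ! d)" using G d(3) unfolding simple_graph_def by blast
  then show ?thesis unfolding sier_adj_def using d l by auto
qed

lemma sier_adj_prefix:
  assumes a: "sier_adj E m w w'"
  shows "sier_adj E (length p + m) (p @ w) (p @ w')"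
proof -
  from a obtain d where d: "d < m" "\<forall>i<d. w ! i = w' ! i" "E (w ! d) (w' ! d)"
    "\<forall>i. d < i \<and> i < m \<longrightarrow> w ! i = w' ! d \<and> w' ! i = w ! d" and l: "length w = m" "length w' = m"
    unfolding sier_adj_def by blast
  show ?thesis unfolding sier_adj_def
  proof (intro conjI exI[of _ "length p + d"])
    show "\<forall>i<length p + d. (p @ w) ! i = (p @ w') ! i"
      using d(2) by (auto simp: nth_append)
    show "\<forall>i. length p + d < i \<and> i < length p + m \<longrightarrow>
        (p @ w) ! i = (p @ w') ! (length p + d) \<and> (p @ w') ! i = (p @ w) ! (length p + d)"
    proof (intro allI impI)
      fix i assume i: "length p + d < i \<and> i < length p + m"
      then have "d < i - length p \<and> i - length p < m" by auto
      then show "(p @ w) ! i = (p @ w') ! (length p + d) \<and> (p @ w') ! i = (p @ w) ! (length p + d)"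
        using d(4) i by (auto simp: nth_append)
    qed
  qed (use d l in \<open>auto simp: nth_append\<close>)
qed

lemma restrict_coloring:
  assumes c: "injective_coloring (sier_verts V (length p + m)) (sier_adj E (length p + m)) h k"
    and p: "set p \<subseteq> V"
  shows "injective_coloring (sier_verts V m) (sier_adj E m) (\<lambda>w. h (p @ w)) k"
proof -
  have mem: "p @ w \<in> sier_verts V (length p + m)" if "w \<in> sier_verts V m" for w
    using that p unfolding sier_verts_def by auto
  show ?thesis unfolding injective_coloring_def
  proof (intro conjI ballI impI)
    fix v assume "v \<in> sier_verts V m"
    then show "h (p @ v) \<in> {1..k}" using c mem unfolding injective_coloring_def by blast
  next
    fix u w assume u: "u \<in> sier_verts V m" and w: "w \<in> sier_verts V m"
      and uw: "u \<noteq> w \<and> h (p @ u) = h (p @ w)"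
    show "\<not> (\<exists>x\<in>sier_verts V m. sier_adj E m u x \<and> sier_adj E m w x)"
    proof
      assume "\<exists>x\<in>sier_verts V m. sier_adj E m u x \<and> sier_adj E m w x"
      then obtain x where x: "x \<in> sier_verts V m" "sier_adj E m u x" "sier_adj E m w x" by blast
      have "p @ u \<noteq> p @ w" using uw by simp
      moreover have "sier_adj E (length p + m) (p @ u) (p @ x)"
        "sier_adj E (length p + m) (p @ w) (p @ x)" using x sier_adj_prefix by blast+
      ultimately show False using c mem[OF u] mem[OF w] mem[OF x(1)] uw
        unfolding injective_coloring_def by blast
    qed
  qed
qed

lemma adj_high:
  assumes a: "sier_adj E n u z" and n: "n \<ge> 2"
    and d: "d < n" "\<forall>i<d. u ! i = z ! i" "E (u ! d) (z ! d)"
    "\<forall>i. d < i \<and> i < n \<longrightarrow> u ! i = z ! d \<and> z ! i = u ! d" and dh: "n - 2 \<le> d"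
  shows "take (n-2) u = take (n-2) z \<and> sier_adj E 2 (drop (n-2) u) (drop (n-2) z)"
proof -
  have l: "length u = n" "length z = n" using a unfolding sier_adj_def by auto
  have tk: "take (n-2) u = take (n-2) z"
    by (rule nth_equalityI) (use l d(2) dh in auto)
  have eq: "(n - 2) + (d - (n - 2)) = d" using dh by simp
  have dd: "drop (n - 2) u ! (d - (n - 2)) = u ! d" "drop (n - 2) z ! (d - (n - 2)) = z ! d"
    using l d(1) by (subst nth_drop, simp, simp only: eq)+
  have "sier_adj E 2 (drop (n-2) u) (drop (n-2) z)"
    unfolding sier_adj_def
  proof (intro conjI exI[of _ "d - (n-2)"])
    show "\<forall>i<d - (n - 2). drop (n - 2) u ! i = drop (n - 2) z ! i"
      using d(2) l dh n by auto
    show "E (drop (n - 2) u ! (d - (n - 2))) (drop (n - 2) z ! (d - (n - 2)))"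
      using d(3) dd by simp
    show "\<forall>i. d - (n - 2) < i \<and> i < 2 \<longrightarrow>
        drop (n - 2) u ! i = drop (n - 2) z ! (d - (n - 2)) \<and>
        drop (n - 2) z ! i = drop (n - 2) u ! (d - (n - 2))"
    proof (intro allI impI)
      fix i assume i: "d - (n - 2) < i \<and> i < 2"
      then have "d < n - 2 + i \<and> n - 2 + i < n" using dh n by auto
      then show "drop (n - 2) u ! i = drop (n - 2) z ! (d - (n - 2)) \<and>
        drop (n - 2) z ! i = drop (n - 2) u ! (d - (n - 2))"
        unfolding dd using d(4) l i n by auto
    qed
  qed (use l n d in auto)
  with tk show ?thesis by blast
qed

lemma adj_low:
  assumes a: "sier_adj E n u z" and n: "n \<ge> 2"
    and d: "d < n" "\<forall>i<d. u ! i = z ! i" "E (u ! d) (z ! d)"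
    "\<forall>i. d < i \<and> i < n \<longrightarrow> u ! i = z ! d \<and> z ! i = u ! d" and dl: "d < n - 2"
  shows "drop (n-2) u = [z ! d, z ! d] \<and> drop (n-2) z = [u ! d, u ! d]"
proof -
  have l: "length u = n" "length z = n" using a unfolding sier_adj_def by auto
  have "drop (n-2) u = [u ! (n-2), u ! (n-1)]" "drop (n-2) z = [z ! (n-2), z ! (n-1)]"
    using l n by (auto intro!: nth_equalityI simp: less_2_cases_iff)
  moreover have "u ! (n-2) = z ! d" "u ! (n-1) = z ! d" "z ! (n-2) = u ! d" "z ! (n-1) = u ! d"
    using d(4) dl n by auto
  ultimately show ?thesis by simp
qed

lemma low_unique:
  assumes G: "simple_graph V E" and l: "length u = n" "length w = n" "length z = n"
    and d1: "d1 < n - 2" "\<forall>i<d1. u ! i = z ! i" "E (u ! d1) (z ! d1)"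
    "\<forall>i. d1 < i \<and> i < n \<longrightarrow> u ! i = z ! d1 \<and> z ! i = u ! d1"
    and d2: "d2 < n - 2" "\<forall>i<d2. w ! i = z ! i" "E (w ! d2) (z ! d2)"
    "\<forall>i. d2 < i \<and> i < n \<longrightarrow> w ! i = z ! d2 \<and> z ! i = w ! d2"
  shows "u = w"
proof -
  have irr: "\<not> E x x" for x using G unfolding simple_graph_def by blast
  have z1: "z ! (n-1) = u ! d1" using d1(4) d1(1) by simp
  have z2: "z ! (n-1) = w ! d2" using d2(4) d2(1) by simp
  have "d1 = d2"
  proof (rule ccontr)
    assume "d1 \<noteq> d2"
    then consider "d1 < d2" | "d2 < d1" by linarith
    then show False
    proof cases
      case 1
      have "d1 < d2 \<and> d2 < n" using 1 d2(1) by simp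
      then have "z ! d2 = u ! d1" using d1(4) by blast
      then have "z ! d2 = w ! d2" using z1 z2 by simp
      then show False using d2(3) irr by simp
    next
      case 2
      have "d2 < d1 \<and> d1 < n" using 2 d1(1) by simp
      then have "z ! d1 = w ! d2" using d2(4) by blast
      then have "z ! d1 = u ! d1" using z1 z2 by simp
      then show False using d1(3) irr by simp
    qed
  qed
  show ?thesis
  proof (rule nth_equalityI)
    fix i assume "i < length u"
    then have i: "i < n" using l by simp
    consider "i < d1" | "i = d1" | "d1 < i" by linarith
    then show "u ! i = w ! i"
    proof cases
      case 1
      then show ?thesis using d1(2) d2(2) \<open>d1 = d2\<close> by simp
    next
      case 2
      then show ?thesis using z1 z2 \<open>d1 = d2\<close> by simp
    next
      case 3
      then have "d1 < i \<and> i < n" "d2 < i \<and> i < n" using i \<open>d1 = d2\<close> by auto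
      then have "u ! i = z ! d1" "w ! i = z ! d2" using d1(4) d2(4) by blast+
      then show ?thesis using \<open>d1 = d2\<close> by simp
    qed
  qed (use l in simp)
qed

lemma drop_mem:
  assumes "w \<in> sier_verts V n" "n \<ge> 2"
  shows "drop (n-2) w \<in> sier_verts V 2"
  using assms set_drop_subset[of "n-2" w] unfolding sier_verts_def by auto

lemma upper:
  assumes G: "simple_graph V E"
    and col: "injective_coloring (sier_verts V 2) (sier_adj E 2) f k"
    and same: "\<forall>u\<in>V. \<forall>v\<in>V. f [u, u] = f [v, v]"
    and nbr: "\<forall>u\<in>V. \<forall>y\<in>sier_verts V 2. sier_adj E 2 [u, u] y \<longrightarrow> f y \<noteq> f [u, u]"
    and n: "n \<ge> 2"
  shows "injective_coloring (sier_verts V n) (sier_adj E n) (\<lambda>w. f (drop (n-2) w)) k"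
  unfolding injective_coloring_def
proof (intro conjI ballI impI)
  fix v assume "v \<in> sier_verts V n"
  then show "f (drop (n-2) v) \<in> {1..k}" using col drop_mem[OF _ n] unfolding injective_coloring_def by blast
next
  fix u w assume u: "u \<in> sier_verts V n" and w: "w \<in> sier_verts V n"
    and uw: "u \<noteq> w \<and> f (drop (n-2) u) = f (drop (n-2) w)"
  have EV: "E a b \<Longrightarrow> a \<in> V \<and> b \<in> V" for a b using G unfolding simple_graph_def by blast
  show "\<not> (\<exists>x\<in>sier_verts V n. sier_adj E n u x \<and> sier_adj E n w x)"
  proof
    assume "\<exists>x\<in>sier_verts V n. sier_adj E n u x \<and> sier_adj E n w x"
    then obtain z where z: "z \<in> sier_verts V n" "sier_adj E n u z" "sier_adj E n w z" by blast
    from z(2) obtain d1 where d1: "d1 < n" "\<forall>i<d1. u ! i = z ! i" "E (u ! d1) (z ! d1)"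
      "\<forall>i. d1 < i \<and> i < n \<longrightarrow> u ! i = z ! d1 \<and> z ! i = u ! d1" 
      unfolding sier_adj_def by blast
    from z(3) obtain d2 where d2: "d2 < n" "\<forall>i<d2. w ! i = z ! i" "E (w ! d2) (z ! d2)"
      "\<forall>i. d2 < i \<and> i < n \<longrightarrow> w ! i = z ! d2 \<and> z ! i = w ! d2" 
      unfolding sier_adj_def by blast
    have l: "length u = n" "length w = n" "length z = n" using z unfolding sier_adj_def by auto
    have mu: "drop (n-2) u \<in> sier_verts V 2" using drop_mem[OF u n] .
    have mw: "drop (n-2) w \<in> sier_verts V 2" using drop_mem[OF w n] .
    have mz: "drop (n-2) z \<in> sier_verts V 2" using drop_mem[OF z(1) n] .
    show False
    proof (cases "d1 < n - 2")
      case c1: True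
      note L1 = adj_low[OF z(2) n d1 c1]
      show ?thesis
      proof (cases "d2 < n - 2")
        case True
        have "u = w" by (rule low_unique[OF G l c1 d1(2-4) True d2(2-4)])
        then show ?thesis using uw by simp
      next
        case False
        have c2': "n - 2 \<le> d2" using False by simp
        note H2 = adj_high[OF z(3) n d2 c2']
        have "sier_adj E 2 (drop (n-2) z) (drop (n-2) w)" using H2 sier_adj_sym[OF G] by auto
        then have "sier_adj E 2 [u ! d1, u ! d1] (drop (n-2) w)" using L1 by simp
        moreover have "u ! d1 \<in> V" "z ! d1 \<in> V" using EV[OF d1(3)] by auto
        ultimately have "f (drop (n-2) w) \<noteq> f [u ! d1, u ! d1]" using nbr mw by blast
        moreover have "f (drop (n-2) u) = f [u ! d1, u ! d1]"
        proof -
          have "f [z ! d1, z ! d1] = f [u ! d1, u ! d1]"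
            using same \<open>u ! d1 \<in> V\<close> \<open>z ! d1 \<in> V\<close> by blast
          then show ?thesis using L1 by simp
        qed
        ultimately show ?thesis using uw by simp
      qed
    next
      case c1: False
      have c1': "n - 2 \<le> d1" using c1 by simp
      note H1 = adj_high[OF z(2) n d1 c1']
      show ?thesis
      proof (cases "d2 < n - 2")
        case True
        note L2 = adj_low[OF z(3) n d2 True]
        have "sier_adj E 2 (drop (n-2) z) (drop (n-2) u)" using H1 sier_adj_sym[OF G] by auto
        then have "sier_adj E 2 [w ! d2, w ! d2] (drop (n-2) u)" using L2 by simp
        moreover have "w ! d2 \<in> V" "z ! d2 \<in> V" using EV[OF d2(3)] by auto
        ultimately have "f (drop (n-2) u) \<noteq> f [w ! d2, w ! d2]" using nbr mu by blast
        moreover have "f (drop (n-2) w) = f [w ! d2, w ! d2]"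
        proof -
          have "f [z ! d2, z ! d2] = f [w ! d2, w ! d2]"
            using same \<open>w ! d2 \<in> V\<close> \<open>z ! d2 \<in> V\<close> by blast
          then show ?thesis using L2 by simp
        qed
        ultimately show ?thesis using uw by simp
      next
        case False
        have c2': "n - 2 \<le> d2" using False by simp
        note H2 = adj_high[OF z(3) n d2 c2']
        have "drop (n-2) u \<noteq> drop (n-2) w"
        proof
          assume "drop (n-2) u = drop (n-2) w"
          moreover have "take (n-2) u = take (n-2) w" using H1 H2 by simp
          ultimately have "u = w" by (metis append_take_drop_id)
          then show False using uw by simp
        qed
        have C: "\<forall>a\<in>sier_verts V 2. \<forall>b\<in>sier_verts V 2. a \<noteq> b \<and> f a = f b \<longrightarrow>
            \<not> (\<exists>x\<in>sier_verts V 2. sier_adj E 2 a x \<and> sier_adj E 2 b x)"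
          using col unfolding injective_coloring_def by blast
        have "\<not> (\<exists>x\<in>sier_verts V 2. sier_adj E 2 (drop (n-2) u) x \<and> sier_adj E 2 (drop (n-2) w) x)"
          using C mu mw \<open>drop (n-2) u \<noteq> drop (n-2) w\<close> uw by blast
        then show ?thesis using mz H1 H2 by blast
      qed
    qed
  qed
qed

lemma chrom_empty: "inj_chromatic {} A = 0"
  unfolding inj_chromatic_def injective_coloring_def by simp

theorem mainTheorem2:
  fixes V :: "'a set" and E :: "'a \<Rightarrow> 'a \<Rightarrow> bool" and f :: "'a list \<Rightarrow> nat"
  assumes G: "simple_graph V E"
    and col: "injective_coloring (sier_verts V 2) (sier_adj E 2) f
                (inj_chromatic (sier_verts V 2) (sier_adj E 2))"
    and same: "\<forall>u\<in>V. \<forall>v\<in>V. f [u, u] = f [v, v]"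
    and nbr: "\<forall>u\<in>V. \<forall>y\<in>sier_verts V 2. sier_adj E 2 [u, u] y \<longrightarrow> f y \<noteq> f [u, u]"
  shows "\<forall>n\<ge>2. inj_chromatic (sier_verts V n) (sier_adj E n)
                 = inj_chromatic (sier_verts V 2) (sier_adj E 2)"
proof (intro allI impI)
  fix n :: nat assume n: "n \<ge> 2"
  define k where "k = inj_chromatic (sier_verts V 2) (sier_adj E 2)"
  define kn where "kn = inj_chromatic (sier_verts V n) (sier_adj E n)"
  have up: "injective_coloring (sier_verts V n) (sier_adj E n) (\<lambda>w. f (drop (n-2) w)) k"
    using upper[OF G col[folded k_def] same nbr n] .
  then have le1: "kn \<le> k" unfolding kn_def inj_chromatic_def by (intro Least_le) blast
  have "\<exists>h. injective_coloring (sier_verts V n) (sier_adj E n) h kn"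
    unfolding kn_def inj_chromatic_def by (rule LeastI_ex) (use up in blast)
  then obtain h where h: "injective_coloring (sier_verts V n) (sier_adj E n) h kn" by blast
  show "kn = k" unfolding kn_def[symmetric] k_def[symmetric]
  proof (cases "V = {}")
    case True
    have "sier_verts V m = {}" if "m \<ge> 1" for m
      using True that unfolding sier_verts_def by auto
    then show ?thesis using n unfolding kn_def k_def by (simp add: chrom_empty)
  next
    case False
    then obtain v where v: "v \<in> V" by blast
    define p where "p = replicate (n-2) v"
    have "length p + 2 = n" using n unfolding p_def by simp
    then have "injective_coloring (sier_verts V (length p + 2)) (sier_adj E (length p + 2)) h kn"
      using h by simp
    then have "injective_coloring (sier_verts V 2) (sier_adj E 2) (\<lambda>w. h (p @ w)) kn"
      by (rule restrict_coloring) (use v in \<open>auto simp: p_def set_replicate_conv_if\<close>)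
    then have "k \<le> kn" unfolding k_def inj_chromatic_def by (intro Least_le) blast
    with le1 show ?thesis by simp
  qed
qed

end
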